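(* Let $L=\mathbb{Z}\langle E_v\rangle_v$ and let $\mathcal{K}=\mathbb{R}_{\ge0}\langle V_j\rangle_j\subset L\otimes\mathbb{R}$ be a cone generated by finitely many vectors $V_j$ all of whose coordinates are positive. Let $S(\mathbf{t})=\sum_{l\in\mathcal{K}\cap L}c^S(l)\mathbf{t}^l$ be a series supported in $\mathcal{K}$, with counting function $Q^S(l)=\sum_{\tilde l\not\ge l}c^S(\tilde l)$, and assume there is a quasipolynomial $\mathfrak{Q}^S$ on $L$ and $l_*\in L$ with $\mathfrak{Q}^S(l)=Q^S(l)$ for all $l\in l_*+\mathcal{K}$. Then for any $l_0\in L$ the series $\mathbf{t}^{-l_0}S(\mathbf{t})|_{\ge0}$ admits a quasipolynomial and a periodic constant in the cone $\mathcal{K}$, and $$\mathfrak{Q}^S(l_0)=\big(\mathbf{t}^{-l_0}S|_{\not\ge0}\big)(\mathbf{1})+\mathrm{pc}^{\mathcal{K}}\big(\mathbf{t}^{-l_0}S|_{\ge0}\big).$$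
   Context: For a Laurent-type series $T=\sum_l c(l)\mathbf{t}^l$ in variables indexed by the coordinates of $L$, $T|_{\ge0}$ is the sum of the terms with $l\ge0$ (all coordinates nonnegative) and $T|_{\not\ge0}$ the sum of the remaining terms (here a finite Laurent polynomial); $T(\mathbf{1})$ means substituting $t_v=1$ for all $v$. A quasipolynomial on $L$ is a function which is polynomial on each coset of some finite index sublattice. A series with counting function $Q$ admits a quasipolynomial $\mathfrak{Q}$ in the cone $\mathcal{K}$ if $Q=\mathfrak{Q}$ on $(l_*+\mathcal{K})\cap L$ for some $l_*$; its periodic constant is $\mathrm{pc}^{\mathcal{K}}=\mathfrak{Q}(0)$, where $\mathfrak{Q}(0)$ means the value at $0$ of the polynomial representing $\mathfrak{Q}$ on the sublattice containing $0$. *)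

theory Defs
  imports Complex_Main "HOL-Library.Function_Algebras"
begin

text \<open>Lattice L = Z^V, elements are functions 'v => int (V finite).
  Series are given by their coefficient functions c :: ('v => int) => real.
  The pointwise order on functions is the coordinatewise order.\<close>

definition real_vec :: "('v \<Rightarrow> int) \<Rightarrow> ('v \<Rightarrow> real)" where
  "real_vec l = (\<lambda>v. real_of_int (l v))"

definition gen_cone :: "('v \<Rightarrow> int) set \<Rightarrow> ('v \<Rightarrow> real) set" where
  "gen_cone Vs = {x. \<exists>a. (\<forall>j\<in>Vs. 0 \<le> a j) \<and>
      x = (\<lambda>v. \<Sum>j\<in>Vs. a j * real_of_int (j v))}"

definition poly_fun :: "(('v::finite \<Rightarrow> int) \<Rightarrow> real) \<Rightarrow> bool" where
  "poly_fun p \<longleftrightarrow> (\<exists>A :: ('v \<Rightarrow> nat) set. \<exists>a :: ('v \<Rightarrow> nat) \<Rightarrow> real. finite A \<and>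
      (\<forall>x. p x = (\<Sum>\<alpha>\<in>A. a \<alpha> * (\<Prod>v\<in>UNIV. real_of_int (x v) ^ \<alpha> v))))"

definition quasipoly :: "(('v::finite \<Rightarrow> int) \<Rightarrow> real) \<Rightarrow> bool" where
  "quasipoly f \<longleftrightarrow> (\<exists>N::int. N > 0 \<and> (\<forall>r :: 'v \<Rightarrow> int. \<exists>p. poly_fun p \<and>
      (\<forall>l. (\<forall>v. l v mod N = r v mod N) \<longrightarrow> f l = p l)))"

definition counting :: "(('v \<Rightarrow> int) \<Rightarrow> real) \<Rightarrow> ('v \<Rightarrow> int) \<Rightarrow> real" where
  "counting c l = (\<Sum>m\<in>{m. \<not> (l \<le> m) \<and> c m \<noteq> 0}. c m)"

definition admits_qp ::
  "(('v::finite \<Rightarrow> int) \<Rightarrow> real) \<Rightarrow> ('v \<Rightarrow> real) set \<Rightarrow> (('v \<Rightarrow> int) \<Rightarrow> real) \<Rightarrow> bool" where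
  "admits_qp c K q \<longleftrightarrow> quasipoly q \<and>
     (\<exists>ls::'v \<Rightarrow> int. \<forall>l. real_vec (l - ls) \<in> K \<longrightarrow> counting c l = q l)"

text \<open>Coefficients of t^(-l0) S |_{>=0} and value at 1 of t^(-l0) S |_{not >= 0}.\<close>
definition shift_pos :: "(('v \<Rightarrow> int) \<Rightarrow> real) \<Rightarrow> ('v \<Rightarrow> int) \<Rightarrow> ('v \<Rightarrow> int) \<Rightarrow> real" where
  "shift_pos c l0 = (\<lambda>l. if 0 \<le> l then c (l + l0) else 0)"

definition shift_neg_at_one :: "(('v \<Rightarrow> int) \<Rightarrow> real) \<Rightarrow> ('v \<Rightarrow> int) \<Rightarrow> real" where
  "shift_neg_at_one c l0 = (\<Sum>l\<in>{l. \<not> (0 \<le> l) \<and> c (l + l0) \<noteq> 0}. c (l + l0))"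

end

theory Submission
  imports Defs
begin


definition mnm :: "('v \<Rightarrow> nat) \<Rightarrow> ('v::finite \<Rightarrow> int) \<Rightarrow> real" where
  "mnm \<alpha> x = (\<Prod>v\<in>UNIV. real_of_int (x v) ^ \<alpha> v)"

lemma poly_fun_alt: "poly_fun p \<longleftrightarrow> (\<exists>A a. finite A \<and> p = (\<lambda>x. \<Sum>\<alpha>\<in>A. a \<alpha> * mnm \<alpha> x))"
  unfolding poly_fun_def mnm_def by (auto simp: fun_eq_iff)

lemma pf_add:
  assumes "poly_fun p" "poly_fun q" shows "poly_fun (\<lambda>x. p x + q x)"
proof -
  obtain A a where A: "finite A" "p = (\<lambda>x. \<Sum>\<alpha>\<in>A. a \<alpha> * mnm \<alpha> x)" using assms(1) poly_fun_alt by blast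
  obtain B b where B: "finite B" "q = (\<lambda>x. \<Sum>\<alpha>\<in>B. b \<alpha> * mnm \<alpha> x)" using assms(2) poly_fun_alt by blast
  define e where "e = (\<lambda>\<alpha>. (if \<alpha> \<in> A then a \<alpha> else 0) + (if \<alpha> \<in> B then b \<alpha> else 0))"
  have "p x + q x = (\<Sum>\<alpha>\<in>A\<union>B. e \<alpha> * mnm \<alpha> x)" for x
  proof -
    have 1: "(\<Sum>\<alpha>\<in>A. a \<alpha> * mnm \<alpha> x) = (\<Sum>\<alpha>\<in>A\<union>B. if \<alpha> \<in> A then a \<alpha> * mnm \<alpha> x else 0)"
      using sum.inter_restrict[of "A\<union>B" "\<lambda>\<alpha>. a \<alpha> * mnm \<alpha> x" A] A B
      by (simp add: Int_absorb1)
    have 2: "(\<Sum>\<alpha>\<in>B. b \<alpha> * mnm \<alpha> x) = (\<Sum>\<alpha>\<in>A\<union>B. if \<alpha> \<in> B then b \<alpha> * mnm \<alpha> x else 0)"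
      using sum.inter_restrict[of "A\<union>B" "\<lambda>\<alpha>. b \<alpha> * mnm \<alpha> x" B] A B
      by (simp add: Int_absorb1)
    show ?thesis unfolding A(2) B(2) 1 2 e_def sum.distrib[symmetric]
      by (rule sum.cong) (auto simp: algebra_simps)
  qed
  then show ?thesis unfolding poly_fun_alt using A B by (intro exI[of _ "A\<union>B"] exI[of _ e]) auto
qed

lemma pf_term: "poly_fun (\<lambda>x. k * mnm \<gamma> x)"
  unfolding poly_fun_alt by (intro exI[of _ "{\<gamma>}"] exI[of _ "\<lambda>_. k"]) auto

lemma pf_const: "poly_fun (\<lambda>x. k)"
  using pf_term[of k 0] by (simp add: mnm_def)

lemma pf_sum: "finite I \<Longrightarrow> (\<And>i. i \<in> I \<Longrightarrow> poly_fun (f i)) \<Longrightarrow> poly_fun (\<lambda>x. \<Sum>i\<in>I. f i x)"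
  by (induction I rule: finite_induct) (auto intro: pf_add pf_const)

lemma mnm_add: "mnm \<alpha> x * mnm \<beta> x = mnm (\<alpha> + \<beta>) x"
  unfolding mnm_def by (simp add: prod.distrib[symmetric] power_add)

lemma pf_mult:
  assumes "poly_fun p" "poly_fun q" shows "poly_fun (\<lambda>x. p x * q x)"
proof -
  obtain A a where A: "finite A" "p = (\<lambda>x. \<Sum>\<alpha>\<in>A. a \<alpha> * mnm \<alpha> x)" using assms(1) poly_fun_alt by blast
  obtain B b where B: "finite B" "q = (\<lambda>x. \<Sum>\<alpha>\<in>B. b \<alpha> * mnm \<alpha> x)" using assms(2) poly_fun_alt by blast
  have "p x * q x = (\<Sum>\<alpha>\<in>A. \<Sum>\<beta>\<in>B. (a \<alpha> * b \<beta>) * mnm (\<alpha> + \<beta>) x)" for x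
    unfolding A(2) B(2) sum_product mnm_add[symmetric]
    by (intro sum.cong refl) (simp add: algebra_simps)
  moreover have "poly_fun (\<lambda>x. \<Sum>\<alpha>\<in>A. \<Sum>\<beta>\<in>B. (a \<alpha> * b \<beta>) * mnm (\<alpha> + \<beta>) x)"
    using A B by (intro pf_sum pf_term) auto
  ultimately show ?thesis by simp
qed

lemma pf_prod: "finite I \<Longrightarrow> (\<And>i. i \<in> I \<Longrightarrow> poly_fun (f i)) \<Longrightarrow> poly_fun (\<lambda>x. \<Prod>i\<in>I. f i x)"
  by (induction I rule: finite_induct) (auto intro: pf_mult pf_const)

lemma pf_power: "poly_fun p \<Longrightarrow> poly_fun (\<lambda>x. p x ^ n)"
  by (induction n) (auto intro: pf_mult pf_const)

lemma pf_coord: "poly_fun (\<lambda>x::'v::finite \<Rightarrow> int. real_of_int (x v))"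
proof -
  have "mnm (\<lambda>w. if w = v then 1 else 0) x = real_of_int (x v)" for x :: "'v \<Rightarrow> int"
  proof -
    have "mnm (\<lambda>w. if w = v then 1 else 0) x = (\<Prod>w\<in>UNIV. if w = v then real_of_int (x w) else 1)"
      unfolding mnm_def by (intro prod.cong) auto
    then show ?thesis by simp
  qed
  then show ?thesis using pf_term[of 1 "\<lambda>w. if w = v then 1 else 0"] by simp
qed

lemma pf_shift:
  assumes "poly_fun p" shows "poly_fun (\<lambda>x. p (x + l0))"
proof -
  obtain A a where A: "finite A" "p = (\<lambda>x. \<Sum>\<alpha>\<in>A. a \<alpha> * mnm \<alpha> x)" using assms(1) poly_fun_alt by blast
  have "poly_fun (\<lambda>x. \<Sum>\<alpha>\<in>A. a \<alpha> * (\<Prod>v\<in>UNIV. (real_of_int (x v) + real_of_int (l0 v)) ^ \<alpha> v))"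
    using A by (intro pf_sum pf_mult pf_const pf_prod pf_power pf_add pf_coord) auto
  then show ?thesis unfolding A(2) mnm_def by simp
qed



lemma cone_nonneg:
  assumes "\<forall>j\<in>Vs. \<forall>v. 0 < j v" "real_vec m \<in> gen_cone Vs" shows "0 \<le> m v"
proof -
  obtain a where a: "\<forall>j\<in>Vs. 0 \<le> a j" "real_vec m = (\<lambda>v. \<Sum>j\<in>Vs. a j * real_of_int (j v))"
    using assms(2) unfolding gen_cone_def by blast
  have "real_of_int (m v) = (\<Sum>j\<in>Vs. a j * real_of_int (j v))"
    using fun_cong[OF a(2), of v] by (simp add: real_vec_def)
  also have "\<dots> \<ge> 0" using a(1) assms(1) by (intro sum_nonneg) (simp add: less_imp_le)
  finally show ?thesis by simp
qed

lemma cone_add: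
  assumes "finite Vs" "j0 \<in> Vs" "(N::int) \<ge> 0" "real_vec x \<in> gen_cone Vs"
  shows "real_vec (x + (\<lambda>v. N * j0 v)) \<in> gen_cone Vs"
proof -
  obtain a where a: "\<forall>j\<in>Vs. 0 \<le> a j" "real_vec x = (\<lambda>v. \<Sum>j\<in>Vs. a j * real_of_int (j v))"
    using assms(4) unfolding gen_cone_def by blast
  define b where "b = (\<lambda>j. a j + (if j = j0 then real_of_int N else 0))"
  have "real_vec (x + (\<lambda>v. N * j0 v)) = (\<lambda>v. \<Sum>j\<in>Vs. b j * real_of_int (j v))"
  proof
    fix v
    have "(\<Sum>j\<in>Vs. b j * real_of_int (j v)) = (\<Sum>j\<in>Vs. a j * real_of_int (j v))
        + (\<Sum>j\<in>Vs. (if j = j0 then real_of_int N * real_of_int (j v) else 0))"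
      unfolding b_def sum.distrib[symmetric] by (intro sum.cong) (auto simp: algebra_simps)
    also have "\<dots> = real_of_int (x v) + real_of_int N * real_of_int (j0 v)"
      using fun_cong[OF a(2), of v] assms(1,2) by (simp add: real_vec_def)
    finally show "real_vec (x + (\<lambda>v. N * j0 v)) v = (\<Sum>j\<in>Vs. b j * real_of_int (j v))"
      by (simp add: real_vec_def)
  qed
  moreover have "\<forall>j\<in>Vs. 0 \<le> b j" using a(1) assms(3) by (simp add: b_def)
  ultimately show ?thesis unfolding gen_cone_def by blast
qed

lemma finite_supp:
  fixes l :: "'v::finite \<Rightarrow> int"
  assumes fin: "finite Vs" and pos: "\<forall>j\<in>Vs. \<forall>v. 0 < j v"
    and supp: "\<forall>l. c l \<noteq> 0 \<longrightarrow> real_vec l \<in> gen_cone Vs"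
  shows "finite {m. \<not> (l \<le> m) \<and> c m \<noteq> 0}"
proof -
  define M where "M = (\<Sum>j\<in>Vs. \<Sum>w\<in>UNIV. j w)"
  define B where "B = M * (\<Sum>v\<in>UNIV. \<bar>l v\<bar>)"
  have jM: "j w \<le> M" if "j \<in> Vs" for j w
  proof -
    have "j w \<le> (\<Sum>w\<in>UNIV. j w)"
      using pos that by (intro member_le_sum) (auto simp: less_imp_le)
    also have "\<dots> \<le> M" unfolding M_def using pos that fin
      by (intro member_le_sum) (auto intro!: sum_nonneg simp: less_imp_le)
    finally show ?thesis .
  qed
  have M0: "0 \<le> M" unfolding M_def using pos by (auto intro!: sum_nonneg simp: less_imp_le)
  have "{m. \<not> (l \<le> m) \<and> c m \<noteq> 0} \<subseteq> {f. \<forall>x. f x \<in> {0..B}}"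
  proof safe
    fix m x assume nle: "\<not> l \<le> m" and cm: "c m \<noteq> 0"
    then have cone: "real_vec m \<in> gen_cone Vs" using supp by blast
    then obtain a where a: "\<forall>j\<in>Vs. 0 \<le> a j" "real_vec m = (\<lambda>v. \<Sum>j\<in>Vs. a j * real_of_int (j v))"
      unfolding gen_cone_def by blast
    have mv: "real_of_int (m v) = (\<Sum>j\<in>Vs. a j * real_of_int (j v))" for v
      using fun_cong[OF a(2), of v] by (simp add: real_vec_def)
    obtain v where v: "m v < l v" using nle by (auto simp: le_fun_def not_le)
    have "real_of_int (m x) = (\<Sum>j\<in>Vs. a j * real_of_int (j x))" by (rule mv)
    also have "\<dots> \<le> (\<Sum>j\<in>Vs. a j * (real_of_int M * real_of_int (j v)))"
    proof (intro sum_mono mult_left_mono)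
      fix j assume j: "j \<in> Vs"
      have "j x \<le> M * j v"
      proof -
        have "j x \<le> M" by (rule jM[OF j])
        also have "\<dots> \<le> M * j v" using pos j M0 by (simp add: mult_le_cancel_left1 int_one_le_iff_zero_less)
        finally show ?thesis .
      qed
      then show "real_of_int (j x) \<le> real_of_int M * real_of_int (j v)"
        by (metis of_int_le_iff of_int_mult)
      show "0 \<le> a j" using a(1) j by blast
    qed
    also have "\<dots> = real_of_int M * real_of_int (m v)"
      unfolding mv sum_distrib_left by (intro sum.cong) auto
    finally have "m x \<le> M * m v" by (metis of_int_le_iff of_int_mult)
    also have "\<dots> \<le> M * \<bar>l v\<bar>" using v M0 by (intro mult_left_mono) auto
    also have "\<dots> \<le> B" unfolding B_def using M0
      by (intro mult_left_mono member_le_sum) auto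
    finally have "m x \<le> B" .
    moreover have "0 \<le> m x" using cone_nonneg[OF pos cone] .
    ultimately show "m x \<in> {0..B}" by simp
  qed
  moreover have "finite {f::'v \<Rightarrow> int. \<forall>x. (x \<in> UNIV \<longrightarrow> f x \<in> {0..B}) \<and> (x \<notin> UNIV \<longrightarrow> f x = 0)}"
    by (rule finite_set_of_finite_funs) auto
  then have "finite {f::'v \<Rightarrow> int. \<forall>x. f x \<in> {0..B}}" by simp
  ultimately show ?thesis by (rule finite_subset)
qed



lemma quasi_shift:
  assumes "quasipoly QS" shows "quasipoly (\<lambda>l. QS (l + l0) - s)"
proof -
  obtain N :: int where N: "N > 0" "\<forall>r :: 'a \<Rightarrow> int. \<exists>p. poly_fun p \<and>
      (\<forall>l. (\<forall>v. l v mod N = r v mod N) \<longrightarrow> QS l = p l)"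
    using assms unfolding quasipoly_def by blast
  have "\<exists>p. poly_fun p \<and> (\<forall>l. (\<forall>v. l v mod N = r v mod N) \<longrightarrow> QS (l + l0) - s = p l)" for r
  proof -
    obtain p where p: "poly_fun p" "\<forall>l. (\<forall>v. l v mod N = (r + l0) v mod N) \<longrightarrow> QS l = p l"
      using N(2) by blast
    have "poly_fun (\<lambda>l. p (l + l0) + (- s))" by (rule pf_add[OF pf_shift[OF p(1)] pf_const])
    moreover have "QS (l + l0) - s = p (l + l0) + (- s)" if "\<forall>v. l v mod N = r v mod N" for l
    proof -
      have "\<forall>v. (l + l0) v mod N = (r + l0) v mod N" using mod_add_cong[OF that[rule_format] refl] by simp
      then show ?thesis using p(2) by simp
    qed
    ultimately show ?thesis by blast
  qed
  then show ?thesis unfolding quasipoly_def using N(1) by blast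
qed

lemma counting_split:
  fixes l l0 :: "'v \<Rightarrow> int"
  assumes fin: "finite {m. \<not> (l + l0 \<le> m) \<and> c m \<noteq> 0}" and l0': "0 \<le> l"
  shows "counting c (l + l0) = counting (shift_pos c l0) l + shift_neg_at_one c l0"
proof -
  define H where "H = {m. \<not> (l \<le> m) \<and> c (m + l0) \<noteq> 0}"
  define H1 where "H1 = {m. \<not> (l \<le> m) \<and> shift_pos c l0 m \<noteq> 0}"
  define H2 where "H2 = {m. \<not> (0 \<le> m) \<and> c (m + l0) \<noteq> 0}"
  have le: "(l + l0 \<le> m + l0) = (l \<le> m)" for m by (simp add: le_fun_def)
  have G: "{m. \<not> (l + l0 \<le> m) \<and> c m \<noteq> 0} = (\<lambda>m. m + l0) ` H"
  proof safe
    fix m assume "\<not> l + l0 \<le> m" "c m \<noteq> 0"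
    then have "m - l0 \<in> H" using le[of "m - l0"] by (simp add: H_def)
    then show "m \<in> (\<lambda>m. m + l0) ` H" by (intro image_eqI[of _ _ "m - l0"]) auto
  qed (auto simp: H_def le)
  have inj: "inj (\<lambda>m::'v \<Rightarrow> int. m + l0)" by (intro injI) simp
  have finH: "finite H" using fin unfolding G by (rule finite_imageD) (rule inj_on_subset[OF inj subset_UNIV])
  have HU: "H = H1 \<union> H2" "H1 \<inter> H2 = {}"
    using l0' unfolding H_def H1_def H2_def shift_pos_def by (auto dest: order_trans)
  have "counting c (l + l0) = (\<Sum>m\<in>H. c (m + l0))"
    unfolding counting_def G by (subst sum.reindex) (auto intro: inj_on_subset[OF inj])
  also have "\<dots> = (\<Sum>m\<in>H1. c (m + l0)) + (\<Sum>m\<in>H2. c (m + l0))"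
    using finH HU by (simp add: sum.union_disjoint)
  also have "(\<Sum>m\<in>H1. c (m + l0)) = counting (shift_pos c l0) l"
    unfolding counting_def H1_def by (intro sum.cong) (auto simp: shift_pos_def split: if_splits)
  also have "(\<Sum>m\<in>H2. c (m + l0)) = shift_neg_at_one c l0"
    unfolding shift_neg_at_one_def H2_def by simp
  finally show ?thesis .
qed



theorem proposition3p7:
  fixes Vs :: "('v::finite \<Rightarrow> int) set"
    and c :: "('v \<Rightarrow> int) \<Rightarrow> real"
    and QS :: "('v \<Rightarrow> int) \<Rightarrow> real"
    and ls l0 :: "'v \<Rightarrow> int"
  assumes "finite Vs"
    and "\<forall>j\<in>Vs. \<forall>v. 0 < j v"
    and "\<forall>l. c l \<noteq> 0 \<longrightarrow> real_vec l \<in> gen_cone Vs"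
    and "quasipoly QS"
    and "\<forall>l. real_vec (l - ls) \<in> gen_cone Vs \<longrightarrow> QS l = counting c l"
  shows "\<exists>q. admits_qp (shift_pos c l0) (gen_cone Vs) q \<and>
           QS l0 = shift_neg_at_one c l0 + q 0"
proof (cases "Vs = {}")
  case True
  define a where "a = QS l0 - shift_neg_at_one c l0"
  define ls' :: "'v \<Rightarrow> int" where "ls' = (\<lambda>_. 1)"
  define d where "d = counting (shift_pos c l0) ls'"
  define v0 :: 'v where "v0 = undefined"
  define q where "q = (\<lambda>l::'v \<Rightarrow> int. a + (d - a) * real_of_int (l v0))"
  have pq: "poly_fun q" unfolding q_def by (rule pf_add[OF pf_const pf_mult[OF pf_const pf_coord]])
  have "quasipoly q" unfolding quasipoly_def by (intro exI[of _ 1]) (use pq in auto)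
  moreover have "counting (shift_pos c l0) l = q l" if "real_vec (l - ls') \<in> gen_cone Vs" for l
  proof -
    have "real_vec (l - ls') = (\<lambda>v. 0)" using that True by (simp add: gen_cone_def)
    then have "l = ls'" by (auto simp: real_vec_def fun_eq_iff dest!: fun_cong)
    then show ?thesis by (simp add: q_def d_def ls'_def)
  qed
  ultimately have "admits_qp (shift_pos c l0) (gen_cone Vs) q" unfolding admits_qp_def by blast
  moreover have "QS l0 = shift_neg_at_one c l0 + q 0" by (simp add: q_def a_def)
  ultimately show ?thesis by blast
next
  case False
  then obtain j0 where j0: "j0 \<in> Vs" by blast
  define s where "s = shift_neg_at_one c l0"
  define N where "N = (\<Sum>v\<in>UNIV. \<bar>ls v - l0 v\<bar>)"
  define ls' where "ls' = ls - l0 + (\<lambda>v. N * j0 v)"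
  define q where "q = (\<lambda>l. QS (l + l0) - s)"
  have N0: "0 \<le> N" unfolding N_def by (rule sum_nonneg) auto
  have "quasipoly q" unfolding q_def by (rule quasi_shift[OF assms(4)])
  moreover have "counting (shift_pos c l0) l = q l" if l: "real_vec (l - ls') \<in> gen_cone Vs" for l
  proof -
    have "0 \<le> ls' v" for v
    proof -
      have "\<bar>ls v - l0 v\<bar> \<le> N" unfolding N_def by (rule member_le_sum) auto
      moreover have "N \<le> N * j0 v" using N0 assms(2) j0
        by (simp add: mult_le_cancel_left1 int_one_le_iff_zero_less)
      ultimately show ?thesis unfolding ls'_def by simp
    qed
    moreover have "0 \<le> (l - ls') v" for v by (rule cone_nonneg[OF assms(2) l])
    ultimately have l0': "0 \<le> l" by (simp add: le_fun_def) (meson add_increasing2 diff_ge_0_iff_ge order_trans)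
    have "l + l0 - ls = (l - ls') + (\<lambda>v. N * j0 v)" unfolding ls'_def by (simp add: fun_eq_iff)
    then have "real_vec (l + l0 - ls) \<in> gen_cone Vs"
      using cone_add[OF assms(1) j0 N0 l] by metis
    then have "QS (l + l0) = counting c (l + l0)" using assms(5) by blast
    also have "\<dots> = counting (shift_pos c l0) l + s" unfolding s_def
      by (rule counting_split[OF finite_supp[OF assms(1-3)] l0'])
    finally show ?thesis by (simp add: q_def)
  qed
  ultimately have "admits_qp (shift_pos c l0) (gen_cone Vs) q" unfolding admits_qp_def by blast
  moreover have "QS l0 = s + q 0" by (simp add: q_def)
  ultimately show ?thesis unfolding s_def by blast
qed

end
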